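(* Let $(\Gamma,\psi)$ be an $H$-asymptotic couple with asymptotic integration, and let $\Psi=\psi(\Gamma\setminus\{0\})$. Then the sets $\Psi$ and $\Psi^{\downarrow}$ are jammed.
   Context: An asymptotic couple is a pair $(\Gamma,\psi)$ with $\Gamma$ an ordered abelian group and $\psi:\Gamma\setminus\{0\}\to\Gamma$ such that for all nonzero $\alpha,\beta$: $\alpha+\beta\ne0\Rightarrow\psi(\alpha+\beta)\ge\min(\psi(\alpha),\psi(\beta))$; $\psi(k\alpha)=\psi(\alpha)$ for $k\in\mathbb{Z}\setminus\{0\}$; $\alpha>0\Rightarrow\alpha+\psi(\alpha)>\psi(\beta)$. $H$-asymptotic: $0<\alpha\le\beta\Rightarrow\psi(\alpha)\ge\psi(\beta)$. Asymptotic integration: every $\alpha\in\Gamma$ equals $\gamma+\psi(\gamma)$ for some $\gamma\ne0$. $\Psi^{\downarrow}=\{\delta\in\Gamma:\delta\le\sigma\text{ for some }\sigma\in\Psi\}$. A set $S\subseteq\Gamma$ is jammed if $S\ne\emptyset$, $S$ has no greatest element, and for every convex subgroup $\Delta\ne\{0\}$ of $\Gamma$ there is $\gamma_0\in S$ such that $\gamma_1-\gamma_0\in\Delta$ for every $\gamma_1\in S$ with $\gamma_1>\gamma_0$. *)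

theory Defs
  imports Main
begin

text \<open>Gamma is a (totally) ordered abelian group, modelled by the type class
  linordered_ab_group_add. psi is a total function whose value at 0 is irrelevant.\<close>

definition zmult :: "int \<Rightarrow> 'a::ab_group_add \<Rightarrow> 'a" where
  "zmult k a = (if 0 \<le> k then ((plus a) ^^ nat k) 0 else - (((plus a) ^^ nat (- k)) 0))"

definition asymptotic_couple :: "('a::linordered_ab_group_add \<Rightarrow> 'a) \<Rightarrow> bool" where
  "asymptotic_couple psi \<longleftrightarrow>
     (\<forall>a b. a \<noteq> 0 \<and> b \<noteq> 0 \<and> a + b \<noteq> 0 \<longrightarrow> psi (a + b) \<ge> min (psi a) (psi b)) \<and>
     (\<forall>a k. a \<noteq> 0 \<and> k \<noteq> 0 \<longrightarrow> psi (zmult k a) = psi a) \<and>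
     (\<forall>a b. a > 0 \<and> b \<noteq> 0 \<longrightarrow> a + psi a > psi b)"

definition H_asymptotic :: "('a::linordered_ab_group_add \<Rightarrow> 'a) \<Rightarrow> bool" where
  "H_asymptotic psi \<longleftrightarrow> (\<forall>a b. 0 < a \<and> a \<le> b \<longrightarrow> psi a \<ge> psi b)"

definition asymptotic_integration :: "('a::linordered_ab_group_add \<Rightarrow> 'a) \<Rightarrow> bool" where
  "asymptotic_integration psi \<longleftrightarrow> (\<forall>a. \<exists>g. g \<noteq> 0 \<and> a = g + psi g)"

definition PsiSet :: "('a::linordered_ab_group_add \<Rightarrow> 'a) \<Rightarrow> 'a set" where
  "PsiSet psi = psi ` {g. g \<noteq> 0}"

definition down_closure :: "'a::linorder set \<Rightarrow> 'a set" where
  "down_closure S = {d. \<exists>s\<in>S. d \<le> s}"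

definition convex_subgroup :: "'a::linordered_ab_group_add set \<Rightarrow> bool" where
  "convex_subgroup D \<longleftrightarrow> 0 \<in> D \<and> (\<forall>x\<in>D. \<forall>y\<in>D. x + y \<in> D) \<and> (\<forall>x\<in>D. - x \<in> D) \<and>
     (\<forall>x y z. x \<in> D \<and> z \<in> D \<and> x \<le> y \<and> y \<le> z \<longrightarrow> y \<in> D)"

definition jammed :: "'a::linordered_ab_group_add set \<Rightarrow> bool" where
  "jammed S \<longleftrightarrow> S \<noteq> {} \<and> \<not> (\<exists>m\<in>S. \<forall>s\<in>S. s \<le> m) \<and>
     (\<forall>D. convex_subgroup D \<and> D \<noteq> {0} \<longrightarrow>
        (\<exists>g0\<in>S. \<forall>g1\<in>S. g1 > g0 \<longrightarrow> g1 - g0 \<in> D))"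

end

theory Submission
  imports Defs
begin

lemma pos_in_D:
  fixes D :: "'a::linordered_ab_group_add set"
  assumes "convex_subgroup D" "D \<noteq> {0}"
  shows "\<exists>d\<in>D. d > 0"
proof -
  have z: "0 \<in> D" and n: "\<forall>x\<in>D. - x \<in> D" using assms(1) unfolding convex_subgroup_def by blast+
  obtain x where x: "x \<in> D" "x \<noteq> 0" using assms(2) z by blast
  show ?thesis
  proof (cases "x > 0")
    case True thus ?thesis using x by blast
  next
    case False
    hence "-x > 0" using x by (simp add: neg_less_iff_less not_less order_le_less)
    thus ?thesis using n x by blast
  qed
qed

theorem lemma3p11:
  fixes psi :: "'a::linordered_ab_group_add \<Rightarrow> 'a"
  assumes "asymptotic_couple psi"
    and "H_asymptotic psi"
    and "asymptotic_integration psi"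
  shows "jammed (PsiSet psi) \<and> jammed (down_closure (PsiSet psi))"
proof -
  have ax3: "\<And>a b. a > 0 \<Longrightarrow> b \<noteq> 0 \<Longrightarrow> a + psi a > psi b"
    using assms(1) unfolding asymptotic_couple_def by blast
  have ai: "\<And>a. \<exists>g. g \<noteq> 0 \<and> a = g + psi g"
    using assms(3) unfolding asymptotic_integration_def by blast
  obtain g0 where g0: "(g0::'a) \<noteq> 0" using ai by blast
  have ne: "PsiSet psi \<noteq> {}" using g0 unfolding PsiSet_def by blast
  have nomax: "\<And>m. m \<in> PsiSet psi \<Longrightarrow> \<exists>s\<in>PsiSet psi. s > m"
  proof (rule ccontr)
    fix m assume m: "m \<in> PsiSet psi" and h: "\<not> (\<exists>s\<in>PsiSet psi. s > m)"
    obtain b where b: "b \<noteq> 0" "m = psi b" using m unfolding PsiSet_def by blast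
    obtain g where g: "g \<noteq> 0" "m = g + psi g" using ai by blast
    show False
    proof (cases "g > 0")
      case True thus False using ax3[OF True b(1)] g b by simp
    next
      case False
      hence "g < 0" using g(1) by simp
      hence "m < psi g" using g by (simp add: add_neg_nonpos)
      moreover have "psi g \<in> PsiSet psi" using g unfolding PsiSet_def by blast
      ultimately show False using h by blast
    qed
  qed
  have jam: "\<And>D. convex_subgroup D \<Longrightarrow> D \<noteq> {0} \<Longrightarrow>
      \<exists>d. d > 0 \<and> psi d \<in> PsiSet psi \<and> (\<forall>g1. g1 \<in> down_closure (PsiSet psi) \<and> g1 > psi d \<longrightarrow> g1 - psi d \<in> D)"
  proof -
    fix D :: "'a set" assume c: "convex_subgroup D" and nz: "D \<noteq> {0}"
    obtain d where d: "d \<in> D" "d > 0" using pos_in_D[OF c nz] by blast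
    have z: "0 \<in> D" and cv: "\<forall>x y z. x \<in> D \<and> z \<in> D \<and> x \<le> y \<and> y \<le> z \<longrightarrow> y \<in> D"
      using c unfolding convex_subgroup_def by blast+
    have "psi d \<in> PsiSet psi" using d unfolding PsiSet_def by auto
    moreover have "\<forall>g1. g1 \<in> down_closure (PsiSet psi) \<and> g1 > psi d \<longrightarrow> g1 - psi d \<in> D"
    proof (intro allI impI)
      fix g1 assume h: "g1 \<in> down_closure (PsiSet psi) \<and> g1 > psi d"
      then obtain b where b: "b \<noteq> 0" "g1 \<le> psi b" unfolding down_closure_def PsiSet_def by blast
      have "d + psi d > psi b" using ax3[OF d(2) b(1)] .
      hence "g1 - psi d \<le> d" using b by (simp add: algebra_simps)
      moreover have "0 \<le> g1 - psi d" using h by (simp add: less_imp_le)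
      ultimately show "g1 - psi d \<in> D" using cv z d(1) by blast
    qed
    ultimately show "\<exists>d. d > 0 \<and> psi d \<in> PsiSet psi \<and> (\<forall>g1. g1 \<in> down_closure (PsiSet psi) \<and> g1 > psi d \<longrightarrow> g1 - psi d \<in> D)"
      using d by blast
  qed
  have sub: "PsiSet psi \<subseteq> down_closure (PsiSet psi)" unfolding down_closure_def by auto
  have j1: "jammed (PsiSet psi)"
    unfolding jammed_def
  proof (intro conjI allI impI)
    show "PsiSet psi \<noteq> {}" by (rule ne)
    show "\<not> (\<exists>m\<in>PsiSet psi. \<forall>s\<in>PsiSet psi. s \<le> m)" using nomax leD by metis
    fix D :: "'a set" assume "convex_subgroup D \<and> D \<noteq> {0}"
    then obtain d where "psi d \<in> PsiSet psi" "\<forall>g1. g1 \<in> down_closure (PsiSet psi) \<and> g1 > psi d \<longrightarrow> g1 - psi d \<in> D"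
      using jam by blast
    thus "\<exists>g0\<in>PsiSet psi. \<forall>g1\<in>PsiSet psi. g0 < g1 \<longrightarrow> g1 - g0 \<in> D" using sub by blast
  qed
  have j2: "jammed (down_closure (PsiSet psi))"
    unfolding jammed_def
  proof (intro conjI allI impI)
    show "down_closure (PsiSet psi) \<noteq> {}" using ne sub by blast
    show "\<not> (\<exists>m\<in>down_closure (PsiSet psi). \<forall>s\<in>down_closure (PsiSet psi). s \<le> m)"
    proof
      assume "\<exists>m\<in>down_closure (PsiSet psi). \<forall>s\<in>down_closure (PsiSet psi). s \<le> m"
      then obtain m where m: "m \<in> down_closure (PsiSet psi)" "\<forall>s\<in>down_closure (PsiSet psi). s \<le> m" by blast
      then obtain s where s: "s \<in> PsiSet psi" "m \<le> s" unfolding down_closure_def by blast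
      obtain t where t: "t \<in> PsiSet psi" "t > s" using nomax[OF s(1)] by blast
      have "t \<le> m" using m(2) t(1) sub by blast
      thus False using s t by simp
    qed
    fix D :: "'a set" assume "convex_subgroup D \<and> D \<noteq> {0}"
    then obtain d where "psi d \<in> PsiSet psi" "\<forall>g1. g1 \<in> down_closure (PsiSet psi) \<and> g1 > psi d \<longrightarrow> g1 - psi d \<in> D"
      using jam by blast
    thus "\<exists>g0\<in>down_closure (PsiSet psi). \<forall>g1\<in>down_closure (PsiSet psi). g0 < g1 \<longrightarrow> g1 - g0 \<in> D" using sub by blast
  qed
  show ?thesis using j1 j2 by blast
qed

end
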